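(* Under the setting below, let $(x^*,z^*,s^* )$ with multiplier $\lambda^*$ for (C) (and nonnegative multipliers for the other constraints) be a KKT point of (P). Then for every $t$ with $(\beta_t,\theta_t)\in\Omega^{IV}_t(\lambda^* )$ we have $(x_t^*,z_t^* )=(x^{IV}_t(\lambda^* ),0)$, where $x^{IV}_t(\lambda)\in(0,1]$ satisfies $\theta_t u_t'(x^{IV}_t(\lambda))-\beta_t c_t e_t'(x^{IV}_t(\lambda)c_t)=d_t\lambda$, and $\Omega^{IV}_t(\lambda)=\Big\{(\beta,\theta):\beta>0,\ \theta<\frac{X_t(\lambda)}{u_t'(a_t(\beta,\lambda))},\ \theta\le\frac{\beta c_te_t'(c_t)+d_t\lambda}{u_t'(1)}\Big\}$.
   Context: Fix an integer $T\ge 1$, a data cap $Q>0$ and an overage fee $\pi>0$. For each $t\in\{1,\dots,T\}$ fix reals $d_t\ge 0$, $r_t\ge 0$, $c_t>0$, $p_t>0$, $\theta_t>0$, $\beta_t>0$ and functions $u_t,e_t:[0,\infty)\to\mathbb{R}$ such that: $u_t$ is continuous, increasing and strictly concave, differentiable on $(0,\infty)$, and $u_t':(0,\infty)\to(0,\infty)$ is a strictly decreasing bijection with inverse $u_t'^{-1}$; $e_t$ is increasing, strictly convex and continuously differentiable, and $e_t':[0,\infty)\to[0,\infty)$ is a strictly increasing bijection with inverse $e_t'^{-1}$. For $0\le z\le x\le 1$ let $\tilde f_t(x,z)=\theta_t u_t(x)-\beta_t e_t((x-z)c_t)-p_t c_t z$ and $\tilde h_t(x,z)=d_t x+r_t z$.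 Problem (P): maximize $\sum_{t=1}^T \tilde f_t(x_t,z_t)-\pi s$ over $x,z\in\mathbb{R}^T$, $s\in\mathbb{R}$, subject to $0\le z_t\le x_t\le 1$ for all $t$, $s\ge 0$, and (C): $s\ge \sum_{t=1}^T\tilde h_t(x_t,z_t)-Q$. A KKT point of (P) consists of a feasible $(x^*,z^*,s^* )$ and nonnegative Lagrange multipliers for all constraints satisfying stationarity of the Lagrangian and complementary slackness; $\lambda^*$ denotes the multiplier of (C) (the shadow price of wireless data). For $\lambda\ge 0$ and $\beta>0$ write $a_t(\beta,\lambda)=\frac{1}{c_t}\,e_t'^{-1}\!\Big(\frac{p_tc_t+r_t\lambda}{\beta c_t}\Big)$ and $X_t(\lambda)=p_tc_t+(d_t+r_t)\lambda$. *)

theory Defs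
  imports "HOL-Analysis.Analysis"
begin

definition strict_convex_on :: "real set \<Rightarrow> (real \<Rightarrow> real) \<Rightarrow> bool" where
  "strict_convex_on S f \<longleftrightarrow> convex S \<and>
     (\<forall>a\<in>S. \<forall>b\<in>S. a \<noteq> b \<longrightarrow> (\<forall>m. 0 < m \<and> m < 1 \<longrightarrow>
        f ((1 - m) * a + m * b) < (1 - m) * f a + m * f b))"

definition strict_concave_on :: "real set \<Rightarrow> (real \<Rightarrow> real) \<Rightarrow> bool" where
  "strict_concave_on S f \<longleftrightarrow> strict_convex_on S (\<lambda>y. - f y)"

definition ftil :: "real \<Rightarrow> real \<Rightarrow> real \<Rightarrow> real \<Rightarrow> (real \<Rightarrow> real) \<Rightarrow> (real \<Rightarrow> real)
                      \<Rightarrow> real \<Rightarrow> real \<Rightarrow> real" where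
  "ftil \<theta> \<beta> c p u e x z = \<theta> * u x - \<beta> * e ((x - z) * c) - p * c * z"

definition htil :: "real \<Rightarrow> real \<Rightarrow> real \<Rightarrow> real \<Rightarrow> real" where
  "htil d r x z = d * x + r * z"

text \<open>Lagrangian: sum f~_t - fee s + lam (s - sum h~_t + Q) + mu s
     + sum_t (alpha_t z_t + gamma_t (x_t - z_t) + delta_t (1 - x_t)).
  Partial derivatives of f~_t are taken on its natural domain (u_t, e_t live on [0,oo)).\<close>
definition kkt_point ::
  "nat \<Rightarrow> real \<Rightarrow> real \<Rightarrow> (nat \<Rightarrow> real) \<Rightarrow> (nat \<Rightarrow> real) \<Rightarrow> (nat \<Rightarrow> real) \<Rightarrow> (nat \<Rightarrow> real)
   \<Rightarrow> (nat \<Rightarrow> real) \<Rightarrow> (nat \<Rightarrow> real) \<Rightarrow> (nat \<Rightarrow> real \<Rightarrow> real) \<Rightarrow> (nat \<Rightarrow> real \<Rightarrow> real)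
   \<Rightarrow> (nat \<Rightarrow> real) \<Rightarrow> (nat \<Rightarrow> real) \<Rightarrow> real \<Rightarrow> real \<Rightarrow> bool" where
  "kkt_point T Q fee d r c p \<theta> \<beta> u e x z s lam \<longleftrightarrow>
     (\<forall>t\<in>{1..T}. 0 \<le> z t \<and> z t \<le> x t \<and> x t \<le> 1) \<and> 0 \<le> s \<and>
     s \<ge> (\<Sum>t=1..T. htil (d t) (r t) (x t) (z t)) - Q \<and>
     0 \<le> lam \<and>
     (\<exists>mu alpha gamma delta.
        0 \<le> mu \<and>
        - fee + lam + mu = 0 \<and>
        mu * s = 0 \<and>
        lam * (s - (\<Sum>t=1..T. htil (d t) (r t) (x t) (z t)) + Q) = 0 \<and>
        (\<forall>t\<in>{1..T}. 0 \<le> alpha t \<and> 0 \<le> gamma t \<and> 0 \<le> delta t \<and>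
           alpha t * z t = 0 \<and> gamma t * (x t - z t) = 0 \<and> delta t * (1 - x t) = 0 \<and>
           (\<exists>Dx Dz.
              ((\<lambda>\<xi>. ftil (\<theta> t) (\<beta> t) (c t) (p t) (u t) (e t) \<xi> (z t))
                  has_real_derivative Dx) (at (x t) within {z t..}) \<and>
              ((\<lambda>\<zeta>. ftil (\<theta> t) (\<beta> t) (c t) (p t) (u t) (e t) (x t) \<zeta>)
                  has_real_derivative Dz) (at (z t) within {..x t}) \<and>
              Dx - lam * d t + gamma t - delta t = 0 \<and>
              Dz - lam * r t + alpha t - gamma t = 0)))"

definition a_fun :: "real \<Rightarrow> real \<Rightarrow> real \<Rightarrow> real \<Rightarrow> (real \<Rightarrow> real) \<Rightarrow> real \<Rightarrow> real \<Rightarrow> real" where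
  "a_fun c p r d e' \<beta> lam = (1 / c) * inv_into {0..} e' ((p * c + r * lam) / (\<beta> * c))"

definition X_fun :: "real \<Rightarrow> real \<Rightarrow> real \<Rightarrow> real \<Rightarrow> real \<Rightarrow> real" where
  "X_fun c p r d lam = p * c + (d + r) * lam"

definition Omega_IV :: "real \<Rightarrow> real \<Rightarrow> real \<Rightarrow> real \<Rightarrow> (real \<Rightarrow> real) \<Rightarrow> (real \<Rightarrow> real)
                         \<Rightarrow> real \<Rightarrow> (real \<times> real) set" where
  "Omega_IV c p r d u' e' lam = {(\<beta>, \<theta>). \<beta> > 0 \<and>
      \<theta> < X_fun c p r d lam / u' (a_fun c p r d e' \<beta> lam) \<and>
      \<theta> \<le> (\<beta> * c * e' c + d * lam) / u' 1}"

definition x_IV :: "real \<Rightarrow> real \<Rightarrow> real \<Rightarrow> real \<Rightarrow> (real \<Rightarrow> real) \<Rightarrow> (real \<Rightarrow> real)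
                     \<Rightarrow> real \<Rightarrow> real" where
  "x_IV \<theta> \<beta> c d u' e' lam =
     (THE \<xi>. 0 < \<xi> \<and> \<xi> \<le> 1 \<and> \<theta> * u' \<xi> - \<beta> * c * e' (\<xi> * c) = d * lam)"

end

theory Submission
  imports Defs
begin


lemma nb1: "at b within {a..} \<noteq> bot" if "(a::real) \<le> b"
proof (cases "a = b")
  case True thus ?thesis by (simp add: at_within_Ici_at_right)
next
  case False
  hence "a < b" using that by auto
  hence "at b within {a..b} = at_left b" by (rule at_within_Icc_at_left)
  moreover have "at b within {a..b} \<le> at b within {a..}" by (rule at_le) auto
  ultimately show ?thesis using trivial_limit_at_left_real by (metis bot.extremum_uniqueI)
qed
lemma nb2: "(a::real) \<le> b \<Longrightarrow> at a within {..b} \<noteq> bot"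
  by (metis atMost_subset_iff at_le at_within_Iic_at_left bot.extremum_uniqueI trivial_limit_at_left_real)
lemma noderiv0:
  fixes u u' :: "real \<Rightarrow> real"
  assumes uc: "continuous_on {0..} u"
    and ud: "\<And>y. y > 0 \<Longrightarrow> (u has_real_derivative u' y) (at y)"
    and us: "\<And>M. M > 0 \<Longrightarrow> \<exists>y>0. u' y = M"
    and dec: "\<And>a b. 0 < a \<Longrightarrow> a < b \<Longrightarrow> u' b < u' a"
  shows "\<not> (u has_real_derivative D) (at 0 within {0..})"
proof
  assume h: "(u has_real_derivative D) (at 0 within {0..})"
  obtain y0 where y0: "y0 > 0" "u' y0 = max (D+1) 1" using us[of "max (D+1) 1"] by (metis less_max_iff_disj zero_less_one)
  have lim: "((\<lambda>y. (u y - u 0) / (y - 0)) \<longlongrightarrow> D) (at 0 within {0<..})"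
    using h unfolding has_field_derivative_iff
    by (metis at_within_Icc_at_right at_within_Ici_at_right tendsto_within_subset Ioi_le_Ico)
  hence ev1: "eventually (\<lambda>y. (u y - u 0) / (y - 0) < D + 1) (at 0 within {0<..})"
    by (rule order_tendstoD) simp
  have ev2: "eventually (\<lambda>y. 0 < y \<and> y < y0) (at 0 within {0<..})"
    using y0(1) unfolding eventually_at_right_field by (auto intro: exI[of _ y0])
  have "eventually (\<lambda>y. False) (at_right (0::real))"
    using ev1 ev2
  proof eventually_elim
    case (elim y)
    hence y: "0 < y" "y < y0" by auto
    have "continuous_on {0..y} u" using uc by (rule continuous_on_subset) auto
    moreover have "\<And>w. 0 < w \<Longrightarrow> w < y \<Longrightarrow> u differentiable at w"
      using ud real_differentiable_def by blast
    ultimately obtain l w where w: "0 < w" "w < y" "(u has_real_derivative l) (at w)"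
      "u y - u 0 = (y - 0) * l" using MVT[OF y(1)] by blast
    have "l = u' w" using DERIV_unique[OF w(3) ud[OF w(1)]] .
    hence "l > max (D+1) 1" using dec[OF w(1), of y0] w y y0 by auto
    hence "(u y - u 0) / (y - 0) > D + 1" using w(4) y by auto
    thus ?case using elim by auto
  qed
  thus False by (simp add: trivial_limit_at_right_real)
qed

lemma chain_e:
  fixes e e' :: "real \<Rightarrow> real"
  assumes ed: "\<And>y. y \<ge> 0 \<Longrightarrow> (e has_real_derivative e' y) (at y within {0..})"
    and g: "(g has_real_derivative G) (at x within S)"
    and img: "g ` S \<subseteq> {0..}" and gx: "g x \<ge> 0"
  shows "((\<lambda>\<xi>. e (g \<xi>)) has_real_derivative e' (g x) * G) (at x within S)"
proof -
  have "(e has_real_derivative e' (g x)) (at (g x) within g ` S)"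
    using DERIV_subset[OF ed[OF gx] img] .
  from DERIV_image_chain[OF this g] show ?thesis by (simp add: o_def)
qed

lemma dx_form:
  assumes "(u has_real_derivative U) (at x within S)"
    "((\<lambda>\<xi>. e ((\<xi> - z)*c)) has_real_derivative E) (at x within S)"
  shows "((\<lambda>\<xi>. ftil \<theta> \<beta> c p u e \<xi> z) has_real_derivative \<theta>*U - \<beta>*E) (at x within S)"
proof -
  have "((\<lambda>\<xi>. \<theta> * u \<xi> - \<beta> * e ((\<xi> - z) * c) - p*c*z) has_real_derivative \<theta>*U - \<beta>*E - 0) (at x within S)"
    by (intro DERIV_diff DERIV_cmult DERIV_const assms)
  thus ?thesis by (simp add: ftil_def)
qed

lemma dz_form:
  assumes "((\<lambda>\<zeta>. e ((x - \<zeta>)*c)) has_real_derivative E) (at z within S)"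
  shows "((\<lambda>\<zeta>. ftil \<theta> \<beta> c p u e x \<zeta>) has_real_derivative - \<beta>*E - p*c) (at z within S)"
proof -
  have "((\<lambda>\<zeta>. \<theta> * u x - \<beta> * e ((x - \<zeta>) * c) - p*c*\<zeta>) has_real_derivative 0 - \<beta>*E - p*c*1) (at z within S)"
    by (intro DERIV_diff DERIV_cmult DERIV_const assms DERIV_ident)
  thus ?thesis by (simp add: ftil_def)
qed


theorem lemma4:
  fixes T :: nat and Q fee :: real
    and d r c p \<theta> \<beta> :: "nat \<Rightarrow> real"
    and u e u' e' :: "nat \<Rightarrow> real \<Rightarrow> real"
    and x z :: "nat \<Rightarrow> real" and s lam :: real
  assumes T: "T \<ge> 1" and Q: "Q > 0" and fee_pos: "fee > 0"
    and par: "\<And>t. t \<in> {1..T} \<Longrightarrow>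
       d t \<ge> 0 \<and> r t \<ge> 0 \<and> c t > 0 \<and> p t > 0 \<and> \<theta> t > 0 \<and> \<beta> t > 0"
    and u_cont: "\<And>t. t \<in> {1..T} \<Longrightarrow> continuous_on {0..} (u t)"
    and u_mono: "\<And>t. t \<in> {1..T} \<Longrightarrow> mono_on {0..} (u t)"
    and u_conc: "\<And>t. t \<in> {1..T} \<Longrightarrow> strict_concave_on {0..} (u t)"
    and u_deriv: "\<And>t y. t \<in> {1..T} \<Longrightarrow> y > 0 \<Longrightarrow> (u t has_real_derivative u' t y) (at y)"
    and u'_bij: "\<And>t. t \<in> {1..T} \<Longrightarrow> bij_betw (u' t) {0<..} {0<..}"
    and u'_dec: "\<And>t a b. t \<in> {1..T} \<Longrightarrow> 0 < a \<Longrightarrow> a < b \<Longrightarrow> u' t b < u' t a"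
    and e_mono: "\<And>t. t \<in> {1..T} \<Longrightarrow> mono_on {0..} (e t)"
    and e_conv: "\<And>t. t \<in> {1..T} \<Longrightarrow> strict_convex_on {0..} (e t)"
    and e_deriv: "\<And>t y. t \<in> {1..T} \<Longrightarrow> y \<ge> 0 \<Longrightarrow>
                     (e t has_real_derivative e' t y) (at y within {0..})"
    and e'_cont: "\<And>t. t \<in> {1..T} \<Longrightarrow> continuous_on {0..} (e' t)"
    and e'_bij: "\<And>t. t \<in> {1..T} \<Longrightarrow> bij_betw (e' t) {0..} {0..}"
    and e'_inc: "\<And>t. t \<in> {1..T} \<Longrightarrow> strict_mono_on {0..} (e' t)"
    and kkt: "kkt_point T Q fee d r c p \<theta> \<beta> u e x z s lam"
  shows "\<forall>t\<in>{1..T}.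
           (\<beta> t, \<theta> t) \<in> Omega_IV (c t) (p t) (r t) (d t) (u' t) (e' t) lam \<longrightarrow>
           x t = x_IV (\<theta> t) (\<beta> t) (c t) (d t) (u' t) (e' t) lam \<and> z t = 0"
proof (intro ballI impI)
  fix t assume t: "t \<in> {1..T}"
    and om: "(\<beta> t, \<theta> t) \<in> Omega_IV (c t) (p t) (r t) (d t) (u' t) (e' t) lam"
  have pt: "d t \<ge> 0" "r t \<ge> 0" "c t > 0" "p t > 0" "\<theta> t > 0" "\<beta> t > 0" using par[OF t] by auto
  from kkt t have xz: "0 \<le> z t" "z t \<le> x t" "x t \<le> 1" and lam: "0 \<le> lam"
    unfolding kkt_point_def by auto
  from kkt obtain alpha gamma delta where
    mult: "\<forall>t\<in>{1..T}. 0 \<le> alpha t \<and> 0 \<le> gamma t \<and> 0 \<le> delta t \<and>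
           alpha t * z t = 0 \<and> gamma t * (x t - z t) = 0 \<and> delta t * (1 - x t) = 0 \<and>
           (\<exists>Dx Dz.
              ((\<lambda>\<xi>. ftil (\<theta> t) (\<beta> t) (c t) (p t) (u t) (e t) \<xi> (z t))
                  has_real_derivative Dx) (at (x t) within {z t..}) \<and>
              ((\<lambda>\<zeta>. ftil (\<theta> t) (\<beta> t) (c t) (p t) (u t) (e t) (x t) \<zeta>)
                  has_real_derivative Dz) (at (z t) within {..x t}) \<and>
              Dx - lam * d t + gamma t - delta t = 0 \<and>
              Dz - lam * r t + alpha t - gamma t = 0)"
    unfolding kkt_point_def by blast
  from mult t obtain Dx Dz where
    ag: "0 \<le> alpha t" "0 \<le> gamma t" "0 \<le> delta t"
      "alpha t * z t = 0" "gamma t * (x t - z t) = 0" "delta t * (1 - x t) = 0"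
    and hDx: "((\<lambda>\<xi>. ftil (\<theta> t) (\<beta> t) (c t) (p t) (u t) (e t) \<xi> (z t))
                  has_real_derivative Dx) (at (x t) within {z t..})"
    and hDz: "((\<lambda>\<zeta>. ftil (\<theta> t) (\<beta> t) (c t) (p t) (u t) (e t) (x t) \<zeta>)
                  has_real_derivative Dz) (at (z t) within {..x t})"
    and eqx: "Dx - lam * d t + gamma t - delta t = 0"
    and eqz: "Dz - lam * r t + alpha t - gamma t = 0"
    by blast
  have gz: "((\<lambda>\<zeta>. (x t - \<zeta>) * c t) has_real_derivative - c t) (at (z t) within {..x t})"
    by (auto intro!: derivative_eq_intros)
  have "((\<lambda>\<zeta>. e t ((x t - \<zeta>) * c t)) has_real_derivative e' t ((x t - z t) * c t) * - c t) (at (z t) within {..x t})"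
    by (rule chain_e[OF e_deriv[OF t] gz]) (use xz pt in auto)
  from dz_form[OF this, of "\<theta> t" "\<beta> t" "p t" "u t"]
  have "Dz = - \<beta> t * (e' t ((x t - z t) * c t) * - c t) - p t * c t"
    using has_field_derivative_unique[OF hDz _ nb2[OF xz(2)]] by blast
  hence "Dz = \<beta> t * c t * e' t ((x t - z t) * c t) - p t * c t" by simp
  hence eqz': "\<beta> t * c t * e' t ((x t - z t) * c t) = p t * c t + lam * r t + gamma t - alpha t"
    using eqz by auto
  have ubij: "bij_betw (u' t) {0<..} {0<..}" using u'_bij[OF t] .
  have upos: "\<And>y. y > 0 \<Longrightarrow> u' t y > 0" using ubij unfolding bij_betw_def by auto
  have usurj: "\<And>M. M > 0 \<Longrightarrow> \<exists>y>0. u' t y = M"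
    using ubij unfolding bij_betw_def by (metis greaterThan_iff image_iff)
  have gx: "\<And>S. ((\<lambda>\<xi>. (\<xi> - z t) * c t) has_real_derivative c t) (at (x t) within S)"
    by (auto intro!: derivative_eq_intros)
  have xpos: "x t > 0"
  proof (rule ccontr)
    assume "\<not> x t > 0"
    hence x0: "x t = 0" "z t = 0" using xz by auto
    have "((\<lambda>\<xi>. e t ((\<xi> - z t) * c t)) has_real_derivative e' t ((x t - z t) * c t) * c t) (at (x t) within {z t..})"
      by (rule chain_e[OF e_deriv[OF t] gx]) (use xz pt in auto)
    hence E: "((\<lambda>\<xi>. e t (\<xi> * c t)) has_real_derivative e' t 0 * c t) (at 0 within {0..})"
      using x0 by simp
    have F: "((\<lambda>\<xi>. \<theta> t * u t \<xi> - \<beta> t * e t (\<xi> * c t)) has_real_derivative Dx) (at 0 within {0..})"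
      using hDx x0 by (simp add: ftil_def)
    have "((\<lambda>\<xi>. (1/\<theta> t) * ((\<theta> t * u t \<xi> - \<beta> t * e t (\<xi> * c t)) + \<beta> t * e t (\<xi> * c t)))
           has_real_derivative (1/\<theta> t) * (Dx + \<beta> t * (e' t 0 * c t))) (at 0 within {0..})"
      by (intro DERIV_cmult DERIV_add F E)
    hence "(u t has_real_derivative (1/\<theta> t) * (Dx + \<beta> t * (e' t 0 * c t))) (at 0 within {0..})"
      using pt by simp
    moreover have "\<not> (u t has_real_derivative (1/\<theta> t) * (Dx + \<beta> t * (e' t 0 * c t))) (at 0 within {0..})"
      by (rule noderiv0[OF u_cont[OF t] u_deriv[OF t] usurj u'_dec[OF t]])
    ultimately show False by blast
  qed
  have "((\<lambda>\<xi>. e t ((\<xi> - z t) * c t)) has_real_derivative e' t ((x t - z t) * c t) * c t) (at (x t) within {z t..})"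
    by (rule chain_e[OF e_deriv[OF t] gx]) (use xz pt in auto)
  from dx_form[OF has_field_derivative_at_within[OF u_deriv[OF t xpos]] this]
  have "Dx = \<theta> t * u' t (x t) - \<beta> t * (e' t ((x t - z t) * c t) * c t)"
    using has_field_derivative_unique[OF hDx _ nb1[OF xz(2)]] by blast
  hence "Dx = \<theta> t * u' t (x t) - \<beta> t * c t * e' t ((x t - z t) * c t)" by simp
  hence eqx': "\<theta> t * u' t (x t) - \<beta> t * c t * e' t ((x t - z t) * c t) = lam * d t - gamma t + delta t"
    using eqx by auto
  have ebij: "bij_betw (e' t) {0..} {0..}" using e'_bij[OF t] .
  have emono: "strict_mono_on {0..} (e' t)" using e'_inc[OF t] .
  define v where "v = (p t * c t + r t * lam) / (\<beta> t * c t)"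
  define a where "a = a_fun (c t) (p t) (r t) (d t) (e' t) (\<beta> t) lam"
  have vpos: "v > 0" unfolding v_def using pt lam by (auto intro!: divide_pos_pos add_pos_nonneg)
  have inv: "inv_into {0..} (e' t) v \<in> {0..}" "e' t (inv_into {0..} (e' t) v) = v"
  proof -
    have vin: "v \<in> e' t ` {0..}" using ebij vpos by (auto simp: bij_betw_def)
    show "inv_into {0..} (e' t) v \<in> {0..}" by (rule inv_into_into[OF vin])
    show "e' t (inv_into {0..} (e' t) v) = v" by (rule f_inv_into_f[OF vin])
  qed
  have e0: "e' t 0 = 0"
  proof -
    obtain w where w: "w \<ge> 0" "e' t w = 0" using ebij unfolding bij_betw_def
      by (metis atLeast_iff image_iff order_refl)
    have "e' t 0 \<ge> 0" using ebij unfolding bij_betw_def by auto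
    moreover have "w > 0 \<Longrightarrow> e' t 0 < e' t w" using emono by (auto simp: strict_mono_on_def)
    ultimately show ?thesis using w by force
  qed
  have a_eq: "a * c t = inv_into {0..} (e' t) v"
    unfolding a_def a_fun_def v_def using pt by simp
  have apos: "a > 0"
  proof -
    have "inv_into {0..} (e' t) v \<noteq> 0" using inv e0 vpos by auto
    hence "inv_into {0..} (e' t) v > 0" using inv by auto
    thus ?thesis using a_eq pt by (metis zero_less_mult_pos2)
  qed
  have omg: "\<theta> t < X_fun (c t) (p t) (r t) (d t) lam / u' t a"
      "\<theta> t \<le> (\<beta> t * c t * e' t (c t) + d t * lam) / u' t 1"
    using om unfolding Omega_IV_def a_def by auto
  have ua: "u' t a > 0" using upos apos .
  have u1: "u' t 1 > 0" using upos by simp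
  have omg1: "\<theta> t * u' t a < p t * c t + (d t + r t) * lam"
    using omg(1) ua by (simp add: X_fun_def pos_less_divide_eq mult.commute)
  have omg2: "\<theta> t * u' t 1 \<le> \<beta> t * c t * e' t (c t) + d t * lam"
    using omg(2) u1 by (simp add: pos_le_divide_eq mult.commute)
  have z0: "z t = 0"
  proof (rule ccontr)
    assume "z t \<noteq> 0"
    hence zp: "z t > 0" using xz by auto
    hence al0: "alpha t = 0" using ag(4) by auto
    have "\<beta> t * c t * e' t ((x t - z t) * c t) \<ge> p t * c t + lam * r t"
      using eqz' al0 ag(2) by auto
    hence ge: "e' t ((x t - z t) * c t) \<ge> v" unfolding v_def using pt
      by (simp add: pos_divide_le_eq mult.commute algebra_simps)
    have "(x t - z t) * c t \<ge> a * c t"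
    proof (rule ccontr)
      assume "\<not> ?thesis"
      hence "(x t - z t) * c t < inv_into {0..} (e' t) v" using a_eq by auto
      hence "e' t ((x t - z t) * c t) < e' t (inv_into {0..} (e' t) v)"
        using emono inv(1) xz pt by (auto simp: strict_mono_on_def)
      thus False using ge inv(2) by auto
    qed
    hence xa: "x t - z t \<ge> a" using pt by simp
    hence "gamma t = 0" using ag(5) apos by auto
    hence "\<theta> t * u' t (x t) \<ge> lam * d t + \<beta> t * c t * e' t ((x t - z t) * c t)"
      using eqx' ag(3) by auto
    moreover have "\<beta> t * c t * e' t ((x t - z t) * c t) = p t * c t + lam * r t"
      using eqz' al0 \<open>gamma t = 0\<close> by auto
    ultimately have "\<theta> t * u' t (x t) \<ge> p t * c t + (d t + r t) * lam"
      by (simp add: algebra_simps)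
    moreover have "u' t (x t) < u' t a" using u'_dec[OF t apos] xa zp by auto
    hence "\<theta> t * u' t (x t) < \<theta> t * u' t a" using pt by simp
    ultimately show False using omg1 by auto
  qed
  have g0: "gamma t = 0" using ag(5) z0 xpos by auto
  have eqn: "\<theta> t * u' t (x t) - \<beta> t * c t * e' t (x t * c t) = d t * lam"
  proof (cases "x t < 1")
    case True
    hence "delta t = 0" using ag(6) by auto
    thus ?thesis using eqx' g0 z0 by (simp add: mult.commute)
  next
    case False
    hence x1: "x t = 1" using xz by auto
    have "\<theta> t * u' t 1 - \<beta> t * c t * e' t (c t) \<ge> lam * d t"
      using eqx' g0 z0 x1 ag(3) by auto
    thus ?thesis using omg2 x1 by (simp add: mult.commute)
  qed
  have "x_IV (\<theta> t) (\<beta> t) (c t) (d t) (u' t) (e' t) lam = x t"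
    unfolding x_IV_def
  proof (rule the_equality)
    show "0 < x t \<and> x t \<le> 1 \<and> \<theta> t * u' t (x t) - \<beta> t * c t * e' t (x t * c t) = d t * lam"
      using xpos xz eqn by auto
  next
    fix \<xi> assume h: "0 < \<xi> \<and> \<xi> \<le> 1 \<and> \<theta> t * u' t \<xi> - \<beta> t * c t * e' t (\<xi> * c t) = d t * lam"
    have mono_g: "\<theta> t * u' t b - \<beta> t * c t * e' t (b * c t) < \<theta> t * u' t a' - \<beta> t * c t * e' t (a' * c t)"
      if "0 < a'" "a' < b" for a' b
    proof -
      have "u' t b < u' t a'" using u'_dec[OF t that] .
      hence 1: "\<theta> t * u' t b < \<theta> t * u' t a'" using pt by simp
      have "a' * c t < b * c t" using that pt by simp
      hence "e' t (a' * c t) < e' t (b * c t)" using emono that pt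
        by (auto simp: strict_mono_on_def)
      hence "\<beta> t * c t * e' t (a' * c t) < \<beta> t * c t * e' t (b * c t)" using pt by simp
      thus ?thesis using 1 by linarith
    qed
    show "\<xi> = x t"
    proof (rule ccontr)
      assume "\<xi> \<noteq> x t"
      hence "\<xi> < x t \<or> x t < \<xi>" by auto
      thus False using mono_g[of \<xi> "x t"] mono_g[of "x t" \<xi>] h eqn xpos by auto
    qed
  qed
  thus "x t = x_IV (\<theta> t) (\<beta> t) (c t) (d t) (u' t) (e' t) lam \<and> z t = 0" using z0 by simp
qed

end
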